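(* For $k\in\mathbb{N}$ let $D(k)=\dfrac{1}{4}\cdot\dfrac{3^{2k+2}-9-40k-32k^{2}}{(2k+2)!}$. (i) For every $x\in(0,\pi/2)$ and every $n\in\mathbb{N}$, $$2+\frac{1}{\cos x}\sum_{k=2}^{2n+1}(-1)^{k}D(k)\,x^{2k}<\Big(\frac{\sin x}{x}\Big)^{2}+\frac{\tan x}{x}<2+\frac{1}{\cos x}\sum_{k=2}^{2n}(-1)^{k}D(k)\,x^{2k}.$$ (ii) For every $x\in(0,\pi/2)$ and every integer $m\ge 2$, $$\Big|\Big(\frac{\sin x}{x}\Big)^{2}+\frac{\tan x}{x}-\Big(2+\frac{1}{\cos x}\sum_{k=2}^{m}(-1)^{k}D(k)\,x^{2k}\Big)\Big|<D(m+1)\,\frac{x^{2m+2}}{\cos x}.$$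
   Context: $\mathbb{N}=\{1,2,3,\dots\}$. *)

theory Defs
  imports Complex_Main
begin

definition D :: "nat \<Rightarrow> real" where
  "D k = (1/4) * ((3::real) ^ (2*k+2) - 9 - 40 * real k - 32 * (real k)^2) / fact (2*k+2)"

end

theory Submission imports Defs begin
definition N :: "nat \<Rightarrow> real" where "N k = (3::real) ^ (2*k+2) - 9 - 40 * real k - 32 * (real k)^2"

lemma D_N: "D k = N k / (4 * fact (2*k+2))"
  by (simp add: D_def N_def)

lemma N_Suc: "N (Suc k) = 9 * N k + 256 * real k * (real k + 1)"
proof -
  have "(3::real) ^ (2*Suc k+2) = 9 * 3^(2*k+2)" by (simp add: power_add power_mult)
  then show ?thesis by (simp add: N_def algebra_simps power2_eq_square)
qed

lemma N_ge: "k \<ge> 2 \<Longrightarrow> N k \<ge> 64 * real k * (real k + 1)"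
proof (induction k rule: dec_induct)
  case base then show ?case by (simp add: N_def)
next
  case (step k)
  have "real k \<ge> 2" using step by simp
  have a: "64 * (real k + 1) * (real k + 2) \<le> 9 * (64 * real k * (real k + 1))"
    using \<open>real k \<ge> 2\<close> mult_left_mono[of "real k + 2" "9 * real k" "64 * (real k + 1)"] by (simp add: algebra_simps)
  have b: "0 \<le> 256 * real k * (real k + 1)" by simp
  have i: "9 * N k \<ge> 9 * (64 * real k * (real k + 1))" using step.IH by simp
  have e: "64 * real (Suc k) * (real (Suc k) + 1) = 64 * (real k + 1) * (real k + 2)" by (simp add: algebra_simps)
  show ?case unfolding e N_Suc using a b i by linarith
qed

lemma D_pos: "k \<ge> 2 \<Longrightarrow> D k > 0"
proof -
  assume "k \<ge> 2"
  then have a: "64 * real k * (real k + 1) > 0" by simp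
  have "N k > 0" using N_ge[of k] a \<open>k \<ge> 2\<close> by linarith
  then show ?thesis by (simp add: D_N)
qed

lemma lin: "(56::real)*n \<le> R \<Longrightarrow> 1024*K < 20*n \<Longrightarrow> 4*(9*n+256*K) < R" by (simp add: algebra_simps)

lemma D_dec: "k \<ge> 2 \<Longrightarrow> 4 * D (Suc k) < D k"
proof -
  assume k: "k \<ge> 2"
  have f: "fact (2 * Suc k + 2) = (2*real k+4)*(2*real k+3) * (fact (2*k+2) :: real)"
    by (simp add: fact_Suc algebra_simps)
  have rk: "real k \<ge> 2" using k by simp
  have Nk: "N k \<ge> 64 * real k * (real k + 1)" using N_ge k by blast
  have "4 * N (Suc k) < (2*real k+4)*(2*real k+3) * N k"
    unfolding N_Suc
  proof -
    have kk: "real k * real k \<ge> 2 * 2" using mult_mono[OF rk rk] by simp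
    have "(2*real k+4)*(2*real k+3) \<ge> 56" using rk kk by (simp add: algebra_simps)
    moreover have N0: "0 \<le> N k" using Nk rk
      proof -
        have "0 \<le> 64 * real k * (real k + 1)" by simp
        then show ?thesis using Nk by linarith
      qed
    ultimately have "(2*real k+4)*(2*real k+3) * N k \<ge> 56 * N k"
      using mult_right_mono by blast
    moreover have "20 * N k > 1024 * real k * (real k + 1)" using Nk rk
    proof -
      have p: "0 < real k * (real k + 1)" using rk by simp
      show ?thesis using Nk p by linarith
    qed
    ultimately show "4 * (9 * N k + 256 * real k * (real k + 1)) < (2*real k+4)*(2*real k+3) * N k"
      unfolding mult.assoc by (rule lin)
  qed
  then have ineq: "4 * N (Suc k) < ((2*real k+4)*(2*real k+3)) * N k" by simp
  define P where "P = (2*real k+4)*(2*real k+3)"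
  define F :: real where "F = fact (2*k+2)"
  have Fp: "F > 0" unfolding F_def by simp
  have Pp: "P > 0" unfolding P_def using rk by simp
  have e1: "4 * D (Suc k) = (4 * N (Suc k)) / (4*P*F)" unfolding D_N f P_def[symmetric] F_def[symmetric]
    by (simp add: mult.assoc)
  have e2: "D k = (P * N k) / (4*P*F)" unfolding D_N F_def[symmetric] using Pp by simp
  have "(4 * N (Suc k)) / (4*P*F) < (P * N k) / (4*P*F)"
    by (rule divide_strict_right_mono) (use ineq Pp Fp in \<open>auto simp: P_def\<close>)
  then show ?thesis unfolding e1 e2 .
qed

lemma alg:
  fixes F r s y p u v :: real assumes F: "F > 0" and u: "u > 0" and v: "v > 0"
    and ue: "u = 2*r+1" and ve: "v = 2*r+2"
  shows "(-s)/(v*u*F) * y/4 - (-s)/(v*u*F) * (p*y)/4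
     + s / (u*F) * y - 2 * (s / F * y)
     = s * ((1/4) * (p - 9 - 40 * r - 32 * r^2) / (v*u*F)) * y"
  using F u v apply (simp add: field_simps)
  apply (simp add: ue ve algebra_simps power2_eq_square)
  done

lemma term_eq:
  fixes x :: real
  shows "((-1)^(Suc n)/fact(2*Suc n) * x^(2*Suc n)/4 - (-1)^(Suc n)/fact(2*Suc n) * (3*x)^(2*Suc n)/4)
     + x * ((-1)^n / fact (2*n+1) * x^(2*n+1)) - 2*x^2 * ((-1)^n / fact (2*n) * x^(2*n))
     = (-1)^n * D n * x^(2*n+2)"
proof -
  have e1: "x^(2*Suc n) = x^(2*n+2)" by simp
  have e2: "(3*x)^(2*Suc n) = 3^(2*n+2) * x^(2*n+2)" by (simp add: power_mult_distrib)
  have e3: "x * x^(2*n+1) = x^(2*n+2)" by simp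
  have e4: "x^2 * x^(2*n) = x^(2*n+2)" by (simp add: power_add[symmetric])
  have f1: "fact (2*Suc n) = (2*real n+2)*(2*real n+1)*(fact (2*n)::real)" by (simp add: fact_Suc algebra_simps)
  have f2: "fact (2*n+1) = (2*real n+1)*(fact (2*n)::real)" by (simp add: fact_Suc algebra_simps)
  have f3: "fact (2*n+2) = (2*real n+2)*(2*real n+1)*(fact (2*n)::real)" by (simp add: fact_Suc algebra_simps)
  have Fp: "(fact (2*n)::real) > 0" by simp
  have A: "((-1)^(Suc n)/fact(2*Suc n) * x^(2*Suc n)/4 - (-1)^(Suc n)/fact(2*Suc n) * (3*x)^(2*Suc n)/4)
     + x * ((-1)^n / fact (2*n+1) * x^(2*n+1)) - 2*x^2 * ((-1)^n / fact (2*n) * x^(2*n))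
     = (-((-1)^n))/((2*real n+2)*(2*real n+1)*fact (2*n)) * x^(2*n+2)/4
      - (-((-1)^n))/((2*real n+2)*(2*real n+1)*fact (2*n)) * (3^(2*n+2)*x^(2*n+2))/4
     + (-1)^n / ((2*real n+1)*fact (2*n)) * x^(2*n+2) - 2 * ((-1)^n / fact (2*n) * x^(2*n+2))"
    unfolding f1 f2 e1 e2 e3[symmetric] e4[symmetric] by (simp add: power2_eq_square mult_ac)
  show ?thesis unfolding A D_def f3 by (rule alg[OF Fp]) auto
qed

lemma Gser: fixes x :: real
  shows "(\<lambda>n. (-1)^n * D n * x^(2*n+2)) sums (cos x/4 - cos(3*x)/4 + x * sin x - 2*x^2 * cos x)"
proof -
  have e: "(\<lambda>n. (-1)^n/fact(2*n) * x^(2*n)/4 - (-1)^n/fact(2*n) * (3*x)^(2*n)/4) sums (cos x/4 - cos(3*x)/4)"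
    by (intro sums_diff sums_divide cos_paired)
  then have e': "(\<lambda>n. (-1)^(Suc n)/fact(2*Suc n) * x^(2*Suc n)/4 - (-1)^(Suc n)/fact(2*Suc n) * (3*x)^(2*Suc n)/4) sums (cos x/4 - cos(3*x)/4)"
    by (subst sums_Suc_iff) simp
  have s: "(\<lambda>n. x * ((-1)^n / fact (2*n+1) * x^(2*n+1))) sums (x * sin x)"
    by (intro sums_mult sin_paired)
  have c: "(\<lambda>n. 2*x^2 * ((-1)^n / fact (2*n) * x^(2*n))) sums (2*x^2 * cos x)"
    by (intro sums_mult cos_paired)
  have "(\<lambda>n. ((-1)^(Suc n)/fact(2*Suc n) * x^(2*Suc n)/4 - (-1)^(Suc n)/fact(2*Suc n) * (3*x)^(2*Suc n)/4)
     + x * ((-1)^n / fact (2*n+1) * x^(2*n+1)) - 2*x^2 * ((-1)^n / fact (2*n) * x^(2*n))) sums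
     (cos x/4 - cos(3*x)/4 + x * sin x - 2*x^2 * cos x)"
    by (intro sums_diff sums_add e' s c)
  then show ?thesis unfolding term_eq .
qed

lemma Sser: fixes x :: real assumes x: "x \<noteq> 0" and cx: "cos x \<noteq> 0"
  shows "(\<lambda>k. (-1)^k * D k * x^(2*k)) sums (cos x * ((sin x/x)^2 + tan x/x - 2))"
proof -
  have "(\<lambda>n. (-1)^n * D n * x^(2*n+2) / x^2) sums ((cos x/4 - cos(3*x)/4 + x * sin x - 2*x^2 * cos x) / x^2)"
    by (intro sums_divide Gser)
  moreover have "\<And>n. (-1)^n * D n * x^(2*n+2) / x^2 = (-1)^n * D n * x^(2*n)"
    using x by (simp add: power_add power2_eq_square)
  moreover have "(cos x/4 - cos(3*x)/4 + x * sin x - 2*x^2 * cos x) / x^2 = cos x * ((sin x/x)^2 + tan x/x - 2)"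
  proof -
    have t: "cos x/4 - cos(3*x)/4 = cos x * (sin x)^2" unfolding cos_treble_cos sin_squared_eq
      by (simp add: power3_eq_cube power2_eq_square field_simps)
    show ?thesis unfolding t using x cx by (simp add: tan_def field_simps power2_eq_square)
  qed
  ultimately show ?thesis by simp
qed

lemma D0: "D 0 = 0" and D1: "D (Suc 0) = 0" by (simp_all add: D_def)

lemma main:
  fixes x :: real assumes x0: "0 < x" and x1: "x < pi/2" and m: "m \<ge> 2"
  shows "(sin x / x)^2 + tan x / x - (2 + (1 / cos x) * (\<Sum>k=2..m. (-1)^k * D k * x^(2*k)))
           = (1 / cos x) * (suminf (\<lambda>k. (-1)^k * D k * x^(2*k)) - (\<Sum>k<Suc m. (-1)^k * D k * x^(2*k)))"
    "0 < (-1)^(Suc m) * (suminf (\<lambda>k. (-1)^k * D k * x^(2*k)) - (\<Sum>k<Suc m. (-1)^k * D k * x^(2*k)))"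
    "(-1)^(Suc m) * (suminf (\<lambda>k. (-1)^k * D k * x^(2*k)) - (\<Sum>k<Suc m. (-1)^k * D k * x^(2*k))) < D (m+1) * x^(2*m+2)"
    "0 < cos x"
proof -
  define a where "a k = D k * x^(2*k)" for k
  define b where "b k = (-1)^k * a k" for k
  have cpos: "0 < cos x" using cos_gt_zero[OF x0 x1] .
  show "0 < cos x" by (fact cpos)
  have Sb: "b sums (cos x * ((sin x/x)^2 + tan x/x - 2))"
    unfolding b_def a_def using Sser[of x] x0 cpos by (simp add: mult.assoc)
  define S where "S = suminf b"
  have bS: "b sums S" using Sb sums_unique S_def by metis
  have fS: "(sin x/x)^2 + tan x/x = 2 + (1/cos x) * S"
    using sums_unique2[OF Sb bS] cpos by (simp add: field_simps)
  have apos: "k \<ge> 2 \<Longrightarrow> 0 < a k" for k unfolding a_def using D_pos x0 by simp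
  have x2: "x^2 < 4"
  proof -
    have "x < 2" using x1 pi_half_less_two by linarith
    then show ?thesis using x0 power_strict_mono[of x 2 2] by simp
  qed
  have adec: "k \<ge> 2 \<Longrightarrow> a (Suc k) < a k" for k
  proof -
    assume k: "k \<ge> 2"
    have "a (Suc k) = D (Suc k) * x^2 * x^(2*k)" unfolding a_def by (simp add: power_add mult_ac power2_eq_square)
    also have "\<dots> < (D (Suc k) * 4) * x^(2*k)"
      using x2 D_pos[of "Suc k"] k x0 by (intro mult_strict_right_mono mult_strict_left_mono) auto
    also have "\<dots> < a k" unfolding a_def using D_dec[OF k] x0 by simp
    finally show ?thesis .
  qed
  define T where "T m = S - (\<Sum>k<m. b k)" for m
  have Tpos: "0 < (-1)^m * T m" if m2: "m \<ge> 2" for m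
  proof -
    have sh: "(\<lambda>i. b (i + m)) sums T m" unfolding T_def using bS sums_iff_shift[of b m] by simp
    have g: "(\<lambda>j. sum (\<lambda>i. b (i + m)) {j*2..<j*2+2}) sums T m" by (rule sums_group[OF sh]) simp
    have eq: "sum (\<lambda>i. b (i + m)) {j*2..<j*2+2} = (-1)^m * (a (2*j+m) - a (Suc (2*j+m)))" for j
    proof -
      have "{j*2..<j*2+2} = {j*2, Suc (j*2)}" by auto
      then show ?thesis unfolding b_def by (simp add: power_add mult_ac algebra_simps)
    qed
    have "(\<lambda>j. (-1)^m * sum (\<lambda>i. b (i + m)) {j*2..<j*2+2}) sums ((-1)^m * T m)" by (intro sums_mult g)
    moreover have "(-1)^m * sum (\<lambda>i. b (i + m)) {j*2..<j*2+2} = a (2*j+m) - a (Suc (2*j+m))" for j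
      unfolding eq by (simp add: mult.assoc[symmetric] power_add[symmetric])
    ultimately have g2: "(\<lambda>j. a (2*j+m) - a (Suc (2*j+m))) sums ((-1)^m * T m)" by simp
    have "0 < suminf (\<lambda>j. a (2*j+m) - a (Suc (2*j+m)))"
      by (rule suminf_pos) (use g2 adec m2 in \<open>auto simp: sums_iff\<close>)
    then show ?thesis using g2 sums_unique by metis
  qed
  have Tlt: "(-1)^m * T m < a m" if m2: "m \<ge> 2" for m
  proof -
    have "T (Suc m) = T m - b m" unfolding T_def by simp
    then have Tm: "T m = T (Suc m) + (-1)^m * a m" unfolding b_def by simp
    have sq: "(-1::real)^m * (-1)^m = 1" by (simp add: power_mult_distrib[symmetric])
    have "(-1)^m * T m = (-1)^m * T (Suc m) + ((-1)^m * (-1)^m) * a m"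
      unfolding Tm by (simp add: algebra_simps)
    then have "(-1)^m * T m = a m - (-1)^(Suc m) * T (Suc m)" unfolding sq by simp
    then show ?thesis using Tpos[of "Suc m"] m2 by simp
  qed
  have part: "(\<Sum>k=2..m. b k) = (\<Sum>k<Suc m. b k)" if "m \<ge> 2" for m
    using that
  proof (induction m rule: dec_induct)
    case base
    have "{..<Suc 2} = {0,1,2::nat}" by auto
    then show ?case unfolding b_def a_def by (simp add: D0 D1)
  next
    case (step n)
    then show ?case by (simp add: sum.cl_ivl_Suc)
  qed
  have S_eq: "suminf (\<lambda>k. (-1)^k * D k * x^(2*k)) = S" unfolding S_def b_def a_def by (simp add: mult.assoc)
  have P_eq: "(\<Sum>k<Suc m. (-1)^k * D k * x^(2*k)) = (\<Sum>k<Suc m. b k)" unfolding b_def a_def by (simp add: mult.assoc)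
  have P2_eq: "(\<Sum>k=2..m. (-1)^k * D k * x^(2*k)) = (\<Sum>k<Suc m. b k)" using part[OF m] unfolding b_def a_def by (simp add: mult.assoc)
  show "(sin x / x)^2 + tan x / x - (2 + (1 / cos x) * (\<Sum>k=2..m. (-1)^k * D k * x^(2*k)))
           = (1 / cos x) * (suminf (\<lambda>k. (-1)^k * D k * x^(2*k)) - (\<Sum>k<Suc m. (-1)^k * D k * x^(2*k)))"
    unfolding S_eq P_eq P2_eq fS by (simp add: algebra_simps)
  show "0 < (-1)^(Suc m) * (suminf (\<lambda>k. (-1)^k * D k * x^(2*k)) - (\<Sum>k<Suc m. (-1)^k * D k * x^(2*k)))"
    unfolding S_eq P_eq using Tpos[of "Suc m"] m unfolding T_def by simp
  show "(-1)^(Suc m) * (suminf (\<lambda>k. (-1)^k * D k * x^(2*k)) - (\<Sum>k<Suc m. (-1)^k * D k * x^(2*k))) < D (m+1) * x^(2*m+2)"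
    unfolding S_eq P_eq using Tlt[of "Suc m"] m unfolding T_def a_def by simp
qed

theorem theorem4:
  shows "(\<forall>x::real. \<forall>n::nat. 0 < x \<and> x < pi/2 \<and> n \<ge> 1 \<longrightarrow>
           2 + (1 / cos x) * (\<Sum>k=2..2*n+1. (-1)^k * D k * x^(2*k))
             < (sin x / x)^2 + tan x / x
         \<and> (sin x / x)^2 + tan x / x
             < 2 + (1 / cos x) * (\<Sum>k=2..2*n. (-1)^k * D k * x^(2*k)))
       \<and> (\<forall>x::real. \<forall>m::nat. 0 < x \<and> x < pi/2 \<and> m \<ge> 2 \<longrightarrow>
           \<bar>(sin x / x)^2 + tan x / x - (2 + (1 / cos x) * (\<Sum>k=2..m. (-1)^k * D k * x^(2*k)))\<bar>
             < D (m+1) * x^(2*m+2) / cos x)"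
proof (intro conjI allI impI)
  fix x :: real and n :: nat assume h: "0 < x \<and> x < pi/2 \<and> n \<ge> 1"
  have A: "2 * n + 1 \<ge> 2" "2 * n \<ge> 2" using h by auto
  note L = main[OF _ _ A(1)] and U = main[OF _ _ A(2)]
  have c: "0 < cos x" using L(4) h by blast
  have "(-1::real)^(Suc (2*n+1)) = 1" by simp
  then have l: "0 < (sin x / x)^2 + tan x / x - (2 + (1 / cos x) * (\<Sum>k=2..2*n+1. (-1)^k * D k * x^(2*k)))"
    using L(1,2) h c by simp
  have "(-1::real)^(Suc (2*n)) = -1" by simp
  moreover have "0 < (-1)^(Suc (2*n)) * (suminf (\<lambda>k. (-1)^k * D k * x^(2*k)) - (\<Sum>k<Suc (2*n). (-1)^k * D k * x^(2*k)))"
    using U(2) h by blast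
  ultimately have neg: "(suminf (\<lambda>k. (-1)^k * D k * x^(2*k)) - (\<Sum>k<Suc (2*n). (-1)^k * D k * x^(2*k))) < 0"
    by simp
  have eqU: "(sin x / x)^2 + tan x / x - (2 + (1 / cos x) * (\<Sum>k=2..2*n. (-1)^k * D k * x^(2*k)))
     = (1 / cos x) * (suminf (\<lambda>k. (-1)^k * D k * x^(2*k)) - (\<Sum>k<Suc (2*n). (-1)^k * D k * x^(2*k)))"
    by (rule U(1)) (use h in auto)
  have q: "(1 / cos x) * (suminf (\<lambda>k. (-1)^k * D k * x^(2*k)) - (\<Sum>k<Suc (2*n). (-1)^k * D k * x^(2*k))) < 0"
    by (rule mult_pos_neg) (use c neg in auto)
  have u: "(sin x / x)^2 + tan x / x - (2 + (1 / cos x) * (\<Sum>k=2..2*n. (-1)^k * D k * x^(2*k))) < 0"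
    unfolding eqU by (rule q)
  show "2 + (1 / cos x) * (\<Sum>k=2..2*n+1. (-1)^k * D k * x^(2*k)) < (sin x / x)^2 + tan x / x" using l by simp
  show "(sin x / x)^2 + tan x / x < 2 + (1 / cos x) * (\<Sum>k=2..2*n. (-1)^k * D k * x^(2*k))" using u by simp
next
  fix x :: real and m :: nat assume h: "0 < x \<and> x < pi/2 \<and> m \<ge> 2"
  note M = main[of x m]
  define T where "T = suminf (\<lambda>k. (-1)^k * D k * x^(2*k)) - (\<Sum>k<Suc m. (-1)^k * D k * x^(2*k))"
  have c: "0 < cos x" using M(4) h by blast
  have absT: "\<bar>T\<bar> = (-1)^(Suc m) * T"
    using M(2) h unfolding T_def[symmetric] by (cases "even m") auto
  have "\<bar>(sin x / x)^2 + tan x / x - (2 + (1 / cos x) * (\<Sum>k=2..m. (-1)^k * D k * x^(2*k)))\<bar> = \<bar>T\<bar> / cos x"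
    using M(1) h c unfolding T_def[symmetric] by (simp add: abs_mult)
  also have "\<dots> < D (m+1) * x^(2*m+2) / cos x"
  proof -
    have t3: "(-1)^(Suc m) * T < D (m+1) * x^(2*m+2)" using M(3) h unfolding T_def by blast
    show ?thesis unfolding absT by (rule divide_strict_right_mono[OF t3 c])
  qed
  finally show "\<bar>(sin x / x)^2 + tan x / x - (2 + (1 / cos x) * (\<Sum>k=2..m. (-1)^k * D k * x^(2*k)))\<bar>
             < D (m+1) * x^(2*m+2) / cos x" .
qed

end
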